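(* Let $k\in\mathbb{Z}_+$ and let $A$ be the matrix defined below. Then $A^{\lfloor k/2\rfloor+1}=0$. Consequently, if $M:[0,\infty)\to\mathbb{R}^{\binom{k+d}{d}}$ satisfies $\frac{dM}{dt}=AM$ on $(0,\infty)$ and $M(0)=\lim_{t\to0^+}M(t)$, then for every $t\ge0$, $$\|M(0)\|_\infty\le\|M(t)\|_\infty\sum_{j=0}^{\lfloor k/2\rfloor}\frac{k^j(k-1)^j}{j!}\,t^j.$$
   Context: $A$ is the square matrix indexed by $\{\alpha\in\mathbb{Z}_+^d:\|\alpha\|_1\le k\}$ (where $\|\alpha\|_1=\sum_i\alpha_i$) with entries $A_{\alpha,\alpha'}=\alpha_i(\alpha_i-1)$ if $\alpha'=\alpha-2e_i$ for some $i\in\{1,\dots,d\}$ ($e_i$ the canonical basis vector of $\mathbb{Z}^d$), and $A_{\alpha,\alpha'}=0$ otherwise. $\|\cdot\|_\infty$ is the max-norm of vectors. *)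

theory Defs
  imports "HOL-Analysis.Analysis"
begin

text \<open>Multi-indices alpha in Z_+^d are represented as lists of naturals of length d
  (entry i-1 of the list is the i-th coordinate). The index set of the matrix.\<close>
definition idx :: "nat \<Rightarrow> nat \<Rightarrow> nat list set" where
  "idx d k = {\<alpha>. length \<alpha> = d \<and> sum_list \<alpha> \<le> k}"

text \<open>The matrix A: A(alpha, alpha') = alpha_i (alpha_i - 1) if alpha' = alpha - 2 e_i, else 0.
  For given alpha, alpha' at most one i can satisfy alpha' = alpha - 2 e_i, so the sum
  has at most one nonzero summand.\<close>
definition Amat :: "nat \<Rightarrow> nat list \<Rightarrow> nat list \<Rightarrow> real" where
  "Amat d \<alpha> \<alpha>' = (\<Sum>i<d. if 2 \<le> \<alpha> ! i \<and> \<alpha>' = \<alpha>[i := \<alpha> ! i - 2]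
                          then real (\<alpha> ! i) * (real (\<alpha> ! i) - 1) else 0)"

fun matpow :: "'a set \<Rightarrow> ('a \<Rightarrow> 'a \<Rightarrow> real) \<Rightarrow> nat \<Rightarrow> 'a \<Rightarrow> 'a \<Rightarrow> real" where
  "matpow I B 0 = (\<lambda>a b. if a = b then 1 else 0)"
| "matpow I B (Suc n) = (\<lambda>a b. \<Sum>c\<in>I. B a c * matpow I B n c b)"

definition supnorm :: "'a set \<Rightarrow> ('a \<Rightarrow> real) \<Rightarrow> real" where
  "supnorm I v = Max ((\<lambda>a. \<bar>v a\<bar>) ` I)"

end

theory Submission
  imports Defs
begin

lemma fin_idx: "finite (idx d k)"
proof -
  have "idx d k \<subseteq> {xs. set xs \<subseteq> {..k} \<and> length xs = d}"
    using member_le_sum_list by (fastforce simp: idx_def)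
  then show ?thesis using finite_lists_length_eq[of "{..k}" d] finite_subset by blast
qed

lemma idx_ne: "replicate d 0 \<in> idx d k"
  by (simp add: idx_def sum_list_replicate)

lemma Amat_nonneg: "Amat d a b \<ge> 0"
  unfolding Amat_def by (intro sum_nonneg) auto

lemma Amat_nz:
  assumes "Amat d a b \<noteq> 0"
  shows "\<exists>i<d. 2 \<le> a ! i \<and> b = a[i := a ! i - 2]"
proof (rule ccontr)
  assume "\<not> ?thesis"
  then have "Amat d a b = 0" unfolding Amat_def by (intro sum.neutral) auto
  with assms show False by simp
qed

lemma sum_list_upd2:
  fixes xs :: "nat list"
  shows "i < length xs \<Longrightarrow> 2 \<le> xs ! i \<Longrightarrow> sum_list (xs[i := xs ! i - 2]) + 2 = sum_list xs"
  by (induction xs arbitrary: i) (auto split: nat.splits)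

lemma matpow_nz:
  assumes "a \<in> idx d k" "matpow (idx d k) (Amat d) n a b \<noteq> 0"
  shows "sum_list b + 2 * n = sum_list a"
  using assms
proof (induction n arbitrary: a)
  case 0
  then show ?case by (auto split: if_splits)
next
  case (Suc n)
  then obtain c where c: "c \<in> idx d k" "Amat d a c \<noteq> 0" "matpow (idx d k) (Amat d) n c b \<noteq> 0"
    by (auto elim: sum.not_neutral_contains_not_neutral)
  from Amat_nz[OF c(2)] obtain i where i: "i < d" "2 \<le> a ! i" "c = a[i := a ! i - 2]" by blast
  have "length a = d" using Suc.prems by (simp add: idx_def)
  then have "sum_list c + 2 = sum_list a" using sum_list_upd2[of i a] i by simp
  moreover have "sum_list b + 2 * n = sum_list c" using Suc.IH[OF c(1) c(3)] .
  ultimately show ?case by simp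
qed

lemma part1:
  assumes "a \<in> idx d k" "b \<in> idx d k"
  shows "matpow (idx d k) (Amat d) (k div 2 + 1) a b = 0"
proof (rule ccontr)
  assume "\<not> ?thesis"
  from matpow_nz[OF assms(1) this] have "sum_list b + 2 * (k div 2 + 1) = sum_list a" .
  moreover have "sum_list a \<le> k" using assms by (simp add: idx_def)
  moreover have "k < 2 * (k div 2 + 1)" by presburger
  ultimately show False by linarith
qed

lemma matpow_right:
  assumes "finite I" "a \<in> I" "b \<in> I"
  shows "matpow I B (Suc n) a b = (\<Sum>c\<in>I. matpow I B n a c * B c b)"
  using assms(2)
proof (induction n arbitrary: a)
  case 0
  have "(\<Sum>c\<in>I. B a c * (if c = b then 1 else 0)) = (\<Sum>c\<in>I. if c = b then B a c else 0)"
    by (intro sum.cong) auto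
  moreover have "(\<Sum>c\<in>I. (if a = c then 1 else 0) * B c b) = (\<Sum>c\<in>I. if a = c then B c b else 0)"
    by (intro sum.cong) auto
  ultimately show ?case using assms 0 by simp
next
  case (Suc n)
  have "matpow I B (Suc (Suc n)) a b = (\<Sum>c\<in>I. B a c * matpow I B (Suc n) c b)" by simp
  also have "\<dots> = (\<Sum>c\<in>I. B a c * (\<Sum>e\<in>I. matpow I B n c e * B e b))"
    using Suc.IH by (intro sum.cong) auto
  also have "\<dots> = (\<Sum>e\<in>I. (\<Sum>c\<in>I. B a c * matpow I B n c e) * B e b)"
  proof -
    have "(\<Sum>c\<in>I. B a c * (\<Sum>e\<in>I. matpow I B n c e * B e b))
        = (\<Sum>c\<in>I. \<Sum>e\<in>I. B a c * matpow I B n c e * B e b)"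
      by (simp add: sum_distrib_left mult.assoc)
    also have "\<dots> = (\<Sum>e\<in>I. \<Sum>c\<in>I. B a c * matpow I B n c e * B e b)"
      by (rule sum.swap)
    also have "\<dots> = (\<Sum>e\<in>I. (\<Sum>c\<in>I. B a c * matpow I B n c e) * B e b)"
      by (simp add: sum_distrib_right)
    finally show ?thesis .
  qed
  also have "\<dots> = (\<Sum>e\<in>I. matpow I B (Suc n) a e * B e b)" by simp
  finally show ?case .
qed

lemma Amat_rowsum:
  assumes a: "a \<in> idx d k"
  shows "(\<Sum>b\<in>idx d k. Amat d a b) \<le> real k * (real k - 1)"
proof -
  let ?I = "idx d k"
  have len: "length a = d" and sa: "sum_list a \<le> k" using a by (auto simp: idx_def)
  have ai: "a ! i \<le> k" if "i < d" for i
    using member_le_sum_list[of "a ! i" a] nth_mem[of i a] that len sa by simp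
  have "(\<Sum>b\<in>?I. Amat d a b) = (\<Sum>i<d. \<Sum>b\<in>?I. if 2 \<le> a ! i \<and> b = a[i := a ! i - 2]
                          then real (a ! i) * (real (a ! i) - 1) else 0)"
    unfolding Amat_def by (rule sum.swap)
  also have "\<dots> \<le> (\<Sum>i<d. real (a ! i) * (real k - 1))"
  proof (rule sum_mono)
    fix i assume i: "i \<in> {..<d}"
    have aik: "real (a ! i) \<le> real k" using ai i by simp
    show "(\<Sum>b\<in>?I. if 2 \<le> a ! i \<and> b = a[i := a ! i - 2]
                          then real (a ! i) * (real (a ! i) - 1) else 0) \<le> real (a ! i) * (real k - 1)"
    proof (cases "2 \<le> a ! i")
      case True
      have "(\<Sum>b\<in>?I. if 2 \<le> a ! i \<and> b = a[i := a ! i - 2]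
                          then real (a ! i) * (real (a ! i) - 1) else 0)
          = (\<Sum>b\<in>?I. if b = a[i := a ! i - 2] then real (a ! i) * (real (a ! i) - 1) else 0)"
        using True by (intro sum.cong) auto
      also have "\<dots> = (if a[i := a ! i - 2] \<in> ?I then real (a ! i) * (real (a ! i) - 1) else 0)"
        using fin_idx by simp
      also have "\<dots> \<le> real (a ! i) * (real (a ! i) - 1)" using True by auto
      also have "\<dots> \<le> real (a ! i) * (real k - 1)" using aik by (intro mult_left_mono) auto
      finally show ?thesis .
    next
      case False
      have "0 \<le> real (a ! i) * (real k - 1)"
        using aik by (cases "a ! i = 0") auto
      then show ?thesis using False by simp
    qed
  qed
  also have "\<dots> = (real k - 1) * real (sum_list a)"
    using len by (simp add: sum_list_sum_nth atLeast0LessThan sum_distrib_left mult.commute)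
  also have "\<dots> \<le> real k * (real k - 1)"
  proof (cases "k = 0")
    case True then show ?thesis using sa by simp
  next
    case False then show ?thesis using sa by (simp add: mult.commute mult_right_mono)
  qed
  finally show ?thesis .
qed

lemma matpow_nonneg: "matpow I (Amat d) n a b \<ge> 0"
  by (induction n arbitrary: a) (auto intro!: sum_nonneg mult_nonneg_nonneg Amat_nonneg)

lemma matpow_rowsum:
  assumes a: "a \<in> idx d k"
  shows "(\<Sum>b\<in>idx d k. matpow (idx d k) (Amat d) n a b) \<le> (real k * (real k - 1)) ^ n"
  using a
proof (induction n arbitrary: a)
  case 0
  then show ?case using fin_idx by simp
next
  case (Suc n)
  let ?I = "idx d k" and ?R = "real k * (real k - 1)"
  have R0: "?R \<ge> 0" by (cases k) auto
  have "(\<Sum>b\<in>?I. matpow ?I (Amat d) (Suc n) a b)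
      = (\<Sum>c\<in>?I. Amat d a c * (\<Sum>b\<in>?I. matpow ?I (Amat d) n c b))"
  proof -
    have "(\<Sum>b\<in>?I. matpow ?I (Amat d) (Suc n) a b)
      = (\<Sum>b\<in>?I. \<Sum>c\<in>?I. Amat d a c * matpow ?I (Amat d) n c b)" by simp
    also have "\<dots> = (\<Sum>c\<in>?I. \<Sum>b\<in>?I. Amat d a c * matpow ?I (Amat d) n c b)"
      by (rule sum.swap)
    finally show ?thesis by (simp add: sum_distrib_left)
  qed
  also have "\<dots> \<le> (\<Sum>c\<in>?I. Amat d a c * ?R ^ n)"
    using Suc.IH by (intro sum_mono mult_left_mono Amat_nonneg) auto
  also have "\<dots> = (\<Sum>c\<in>?I. Amat d a c) * ?R ^ n" by (simp add: sum_distrib_right)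
  also have "\<dots> \<le> ?R * ?R ^ n"
    using Amat_rowsum[OF Suc.prems] R0 by (intro mult_right_mono) auto
  finally show ?case by simp
qed

lemma tele:
  fixes c c' G :: "nat \<Rightarrow> real"
  assumes "c' 0 = 0" "\<And>m. c' (Suc m) = - c m"
  shows "(\<Sum>j\<le>n. c' j * G j + G (Suc j) * c j) = c n * G (Suc n)"
  by (induction n) (auto simp: assms)

lemma deriv_c:
  "((\<lambda>s::real. (-s)^j / fact j) has_real_derivative
     (if j = 0 then 0 else - ((-x)^(j-1) / fact (j-1)))) (at x)"
proof (cases j)
  case 0
  then show ?thesis by simp
next
  case (Suc m)
  have "((\<lambda>s::real. (-s)^j / fact j) has_real_derivative
     (real j * (-x)^(j-1) * (-1)) / fact j) (at x)"
    by (auto intro!: derivative_eq_intros)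
  moreover have "(real j * (-x)^(j-1) * (-1)) / fact j = - ((-x)^(j-1) / fact (j-1))"
  proof -
    have gen: "r \<noteq> 0 \<Longrightarrow> (r * z * (-1)) / (r * f) = - (z / f)" for r z f :: real
      by simp
    have "fact j = real j * (fact (j-1) :: real)" using Suc by (simp del: of_nat_Suc)
    then show ?thesis using gen[of "real j"] Suc by simp
  qed
  ultimately show ?thesis using Suc by simp
qed

lemma part2:
  fixes M :: "real \<Rightarrow> nat list \<Rightarrow> real"
  assumes H: "\<forall>\<alpha>\<in>idx d k. \<forall>t>0. ((\<lambda>s. M s \<alpha>) has_real_derivative
              (\<Sum>\<alpha>'\<in>idx d k. Amat d \<alpha> \<alpha>' * M t \<alpha>')) (at t)"
    and L: "\<forall>\<alpha>\<in>idx d k. ((\<lambda>s. M s \<alpha>) \<longlongrightarrow> M 0 \<alpha>) (at_right 0)"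
    and a: "a \<in> idx d k" and t: "t \<ge> 0"
  shows "M 0 a = (\<Sum>j\<le>k div 2. (-t)^j / fact j *
                   (\<Sum>b\<in>idx d k. matpow (idx d k) (Amat d) j a b * M t b))"
proof -
  define I where "I = idx d k"
  define P where "P = matpow I (Amat d)"
  define K where "K = k div 2"
  define G where "G j s = (\<Sum>b\<in>I. P j a b * M s b)" for j s
  define c where "c j s = (-s)^j / fact j" for j :: nat and s :: real
  define F where "F s = (\<Sum>j\<le>K. c j s * G j s)" for s
  have fin: "finite I" unfolding I_def by (rule fin_idx)
  have dG: "((\<lambda>s. G j s) has_real_derivative G (Suc j) s) (at s)" if s: "s > 0" for j s
  proof -
    have "((\<lambda>s. G j s) has_real_derivative
        (\<Sum>b\<in>I. P j a b * (\<Sum>g\<in>I. Amat d b g * M s g))) (at s)"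
      unfolding G_def using H s unfolding I_def
      by (intro DERIV_sum DERIV_cmult) auto
    moreover have "(\<Sum>b\<in>I. P j a b * (\<Sum>g\<in>I. Amat d b g * M s g)) = G (Suc j) s"
    proof -
      have "(\<Sum>b\<in>I. P j a b * (\<Sum>g\<in>I. Amat d b g * M s g))
          = (\<Sum>b\<in>I. \<Sum>g\<in>I. P j a b * Amat d b g * M s g)"
        by (simp add: sum_distrib_left mult.assoc)
      also have "\<dots> = (\<Sum>g\<in>I. \<Sum>b\<in>I. P j a b * Amat d b g * M s g)"
        by (rule sum.swap)
      also have "\<dots> = (\<Sum>g\<in>I. P (Suc j) a g * M s g)"
      proof (rule sum.cong)
        fix g assume g: "g \<in> I"
        have "P (Suc j) a g = (\<Sum>b\<in>I. P j a b * Amat d b g)"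
          unfolding P_def using matpow_right[OF fin _ g] a unfolding I_def by blast
        then show "(\<Sum>b\<in>I. P j a b * Amat d b g * M s g) = P (Suc j) a g * M s g"
          by (simp add: sum_distrib_right)
      qed simp
      finally show ?thesis unfolding G_def .
    qed
    ultimately show ?thesis by simp
  qed
  have GK: "G (Suc K) s = 0" for s
    unfolding G_def P_def K_def I_def using part1[OF a] by simp
  have dF: "(F has_real_derivative 0) (at s)" if s: "s > 0" for s
  proof -
    have "(F has_real_derivative
       (\<Sum>j\<le>K. (if j = 0 then 0 else - c (j-1) s) * G j s + G (Suc j) s * c j s)) (at s)"
      unfolding F_def c_def using dG[OF s]
      by (intro DERIV_sum DERIV_mult deriv_c) auto
    moreover have "(\<Sum>j\<le>K. (if j = 0 then 0 else - c (j-1) s) * G j s + G (Suc j) s * c j s)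
        = c K s * G (Suc K) s"
      by (rule tele[where c="\<lambda>j. c j s" and c'="\<lambda>j. if j = 0 then 0 else - c (j-1) s"]) auto
    ultimately show ?thesis using GK by simp
  qed
  have F0: "F 0 = M 0 a"
  proof -
    have "F 0 = (\<Sum>j\<le>K. if j = 0 then G 0 0 else 0)"
      unfolding F_def c_def by (intro sum.cong) auto
    also have "\<dots> = G 0 0" by simp
    also have "\<dots> = (\<Sum>b\<in>I. if a = b then M 0 b else 0)"
      unfolding G_def P_def by (intro sum.cong) auto
    also have "\<dots> = M 0 a" using a fin unfolding I_def by simp
    finally show ?thesis .
  qed
  have um: "((uminus :: real \<Rightarrow> real) \<longlongrightarrow> 0) (at_right 0)"
    using tendsto_minus[OF tendsto_ident_at[of "0::real" "{0<..}"]] by simp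
  have lim: "(F \<longlongrightarrow> F 0) (at_right 0)"
    unfolding F_def c_def G_def using L um unfolding I_def
    by (auto intro!: tendsto_intros)
  have "M 0 a = F t"
  proof (cases "t = 0")
    case True then show ?thesis using F0 by simp
  next
    case False
    then have tp: "t > 0" using t by simp
    have ev: "eventually (\<lambda>s. F t = F s) (at_right 0)"
    proof (rule eventually_at_rightI[of 0 t])
      fix s assume "s \<in> {0<..<t}"
      then have s: "0 < s" "s < t" by auto
      have "F t = F s"
      proof (rule DERIV_isconst2[of s t F t])
        show "continuous_on {s..t} F"
          using s by (intro continuous_at_imp_continuous_on ballI DERIV_isCont[OF dF]) auto
      qed (use s dF in auto)
      then show "F t = F s" .
    qed (use tp in auto)
    have "((\<lambda>s::real. F t) \<longlongrightarrow> F 0) (at_right 0)"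
      by (subst tendsto_cong[OF ev]) (rule lim)
    then have "F t = F 0" by (simp add: tendsto_const_iff)
    then show ?thesis using F0 by simp
  qed
  then show ?thesis unfolding F_def c_def G_def P_def K_def I_def .
qed

theorem mainTheorem4:
  fixes d k :: nat
  shows "(\<forall>\<alpha>\<in>idx d k. \<forall>\<beta>\<in>idx d k. matpow (idx d k) (Amat d) (k div 2 + 1) \<alpha> \<beta> = 0)
    \<and> (\<forall>M :: real \<Rightarrow> nat list \<Rightarrow> real.
         (\<forall>\<alpha>\<in>idx d k. \<forall>t>0. ((\<lambda>s. M s \<alpha>) has_real_derivative
              (\<Sum>\<alpha>'\<in>idx d k. Amat d \<alpha> \<alpha>' * M t \<alpha>')) (at t))
       \<and> (\<forall>\<alpha>\<in>idx d k. ((\<lambda>s. M s \<alpha>) \<longlongrightarrow> M 0 \<alpha>) (at_right 0))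
       \<longrightarrow> (\<forall>t\<ge>0. supnorm (idx d k) (M 0)
              \<le> supnorm (idx d k) (M t) *
                (\<Sum>j\<le>k div 2. (real k) ^ j * (real k - 1) ^ j / fact j * t ^ j)))"
proof (intro conjI allI impI)
  show "\<forall>\<alpha>\<in>idx d k. \<forall>\<beta>\<in>idx d k. matpow (idx d k) (Amat d) (k div 2 + 1) \<alpha> \<beta> = 0"
    using part1 by blast
next
  fix M :: "real \<Rightarrow> nat list \<Rightarrow> real" and t :: real
  assume HL: "(\<forall>\<alpha>\<in>idx d k. \<forall>t>0. ((\<lambda>s. M s \<alpha>) has_real_derivative
              (\<Sum>\<alpha>'\<in>idx d k. Amat d \<alpha> \<alpha>' * M t \<alpha>')) (at t))
       \<and> (\<forall>\<alpha>\<in>idx d k. ((\<lambda>s. M s \<alpha>) \<longlongrightarrow> M 0 \<alpha>) (at_right 0))"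
    and t: "t \<ge> 0"
  let ?I = "idx d k"
  let ?P = "matpow ?I (Amat d)"
  let ?R = "real k * (real k - 1)"
  let ?S = "supnorm ?I (M t)"
  have fin: "finite ?I" by (rule fin_idx)
  have ne: "?I \<noteq> {}" using idx_ne by blast
  have Mle: "\<bar>M t b\<bar> \<le> ?S" if "b \<in> ?I" for b
    unfolding supnorm_def using fin that by (intro Max_ge) auto
  have S0: "?S \<ge> 0" using Mle[OF idx_ne] by linarith
  have R0: "?R \<ge> 0" by (cases k) auto
  have bound: "\<bar>M 0 a\<bar> \<le> ?S * (\<Sum>j\<le>k div 2. (real k) ^ j * (real k - 1) ^ j / fact j * t ^ j)"
    if a: "a \<in> ?I" for a
  proof -
    have "\<bar>M 0 a\<bar> = \<bar>\<Sum>j\<le>k div 2. (-t)^j / fact j * (\<Sum>b\<in>?I. ?P j a b * M t b)\<bar>"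
      using part2[OF _ _ a t] HL by simp
    also have "\<dots> \<le> (\<Sum>j\<le>k div 2. \<bar>(-t)^j / fact j * (\<Sum>b\<in>?I. ?P j a b * M t b)\<bar>)"
      by (rule sum_abs)
    also have "\<dots> \<le> (\<Sum>j\<le>k div 2. t^j / fact j * (?R ^ j * ?S))"
    proof (rule sum_mono)
      fix j
      have "\<bar>\<Sum>b\<in>?I. ?P j a b * M t b\<bar> \<le> (\<Sum>b\<in>?I. \<bar>?P j a b * M t b\<bar>)"
        by (rule sum_abs)
      also have "\<dots> \<le> (\<Sum>b\<in>?I. ?P j a b * ?S)"
        using Mle matpow_nonneg
        by (intro sum_mono) (auto simp: abs_mult intro: mult_left_mono)
      also have "\<dots> = (\<Sum>b\<in>?I. ?P j a b) * ?S" by (simp add: sum_distrib_right)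
      also have "\<dots> \<le> ?R ^ j * ?S"
        using matpow_rowsum[OF a] S0 by (intro mult_right_mono) auto
      finally have G: "\<bar>\<Sum>b\<in>?I. ?P j a b * M t b\<bar> \<le> ?R ^ j * ?S" .
      have "\<bar>(-t)^j / fact j * (\<Sum>b\<in>?I. ?P j a b * M t b)\<bar>
          = t^j / fact j * \<bar>\<Sum>b\<in>?I. ?P j a b * M t b\<bar>"
        using t by (simp add: abs_mult power_abs)
      also have "\<dots> \<le> t^j / fact j * (?R ^ j * ?S)"
        using G t by (intro mult_left_mono) auto
      finally show "\<bar>(-t)^j / fact j * (\<Sum>b\<in>?I. ?P j a b * M t b)\<bar> \<le> t^j / fact j * (?R ^ j * ?S)" .
    qed
    also have "\<dots> = ?S * (\<Sum>j\<le>k div 2. (real k) ^ j * (real k - 1) ^ j / fact j * t ^ j)"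
      by (simp add: sum_distrib_left power_mult_distrib) (intro sum.cong refl, simp add: field_simps)
    finally show ?thesis .
  qed
  show "supnorm ?I (M 0) \<le> ?S * (\<Sum>j\<le>k div 2. (real k) ^ j * (real k - 1) ^ j / fact j * t ^ j)"
    unfolding supnorm_def[of ?I "M 0"] using fin ne bound by (subst Max_le_iff) auto
qed

end
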